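(* Let $h_{00},h_{11},h_{22},h_{33}>0$, $\beta = \frac{1}{6(\det h)^2}$ with $\det h = h_{00}h_{11}h_{22}h_{33}$, and let $p(x,y)=x^4+x^3y+xy^3+y^4$, $q(x,y)=5x^4+3x^3y-xy^3-3y^4$. Consider $\dot g_{00} = -\beta\, p(g_{11},g_{22})\, g_{00}^3$, $\dot g_{11} = -\beta\, q(g_{11},g_{22})\, g_{00}^2 g_{11}$, $\dot g_{22} = -\beta\, q(g_{22},g_{11})\, g_{00}^2 g_{22}$, $\dot g_{33} = 3\beta\, p(g_{11},g_{22})\, g_{00}^2 g_{33}$, with $g_{ii}(0)=h_{ii}$. Then the solution exists for all $t\ge 0$ and: $g_{00},g_{11},g_{22}\to 0$; $g_{33}$ is increasing and $g_{33}\to\infty$; $g_{11}/g_{22}\to 1$. If $h_{11}=h_{22}$ then, with $\mu = h_{00}^3h_{33}/\det h$, $g_{00} = \mu^{1/2}(24\mu\beta t + h_{11}^{-6})^{-1/6}$, $g_{11}=g_{22} = (24\mu\beta t + h_{11}^{-6})^{-1/6}$, $g_{33} = h_{11}^3 h_{33}(24\mu\beta t + h_{11}^{-6})^{1/2}$. If $h_{11}<h_{22}$, then $g_{11}<g_{22}$ for all $t$, $g_{22}$ is decreasing, $g_{11}/g_{22}$ is increasing, and $(g_{11}g_{22})^{25} = \eta\,(g_{22}-g_{11})^4\left(2g_{22}^2+g_{11}g_{22}+2g_{11}^2\right)^3$ for all $t$, where $\eta = \frac{(h_{11}h_{22})^{25}}{(h_{22}-h_{11})^4(2h_{22}^2+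h_{11}h_{22}+2h_{11}^2)^3}$.
   Context: This system is Bach flow $\partial_t g = B$, $g(0)=h$, on $\mathbb{R}\times Solv$ written in a diagonalizing basis: a left-invariant frame $\{\partial_0,e_1,e_2,e_3\}$ with $[e_i,e_j]=\sum \varepsilon_{ijl}E^{lk}e_k$, $E=\mathrm{diag}(-1,1,0)$, in which the left-invariant product metric is $g=\mathrm{diag}(g_{00},g_{11},g_{22},g_{33})$; $B$ is the Bach tensor. Along the flow $g_{00}g_{11}g_{22}g_{33}=\det h$ is constant. (The case $h_{11}>h_{22}$ is symmetric.) *)

theory Defs
  imports "HOL-Analysis.Analysis"
begin

definition bp :: "real \<Rightarrow> real \<Rightarrow> real" where
  "bp x y = x^4 + x^3*y + x*y^3 + y^4"

definition bq :: "real \<Rightarrow> real \<Rightarrow> real" where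
  "bq x y = 5*x^4 + 3*x^3*y - x*y^3 - 3*y^4"

definition bach_solution ::
  "real \<Rightarrow> real \<Rightarrow> real \<Rightarrow> real \<Rightarrow> real \<Rightarrow>
   (real \<Rightarrow> real) \<Rightarrow> (real \<Rightarrow> real) \<Rightarrow> (real \<Rightarrow> real) \<Rightarrow> (real \<Rightarrow> real) \<Rightarrow> bool" where
  "bach_solution \<beta> h0 h1 h2 h3 g0 g1 g2 g3 \<longleftrightarrow>
     g0 0 = h0 \<and> g1 0 = h1 \<and> g2 0 = h2 \<and> g3 0 = h3 \<and>
     (\<forall>t\<ge>0.
        (g0 has_real_derivative (- \<beta> * bp (g1 t) (g2 t) * (g0 t)^3)) (at t within {0..}) \<and>
        (g1 has_real_derivative (- \<beta> * bq (g1 t) (g2 t) * (g0 t)^2 * g1 t)) (at t within {0..}) \<and>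
        (g2 has_real_derivative (- \<beta> * bq (g2 t) (g1 t) * (g0 t)^2 * g2 t)) (at t within {0..}) \<and>
        (g3 has_real_derivative (3 * \<beta> * bp (g1 t) (g2 t) * (g0 t)^2 * g3 t)) (at t within {0..}))"

end

theory Submission
  imports Defs
begin

lemma deriv_int: "(f has_real_derivative D) (at x within {0..}) \<Longrightarrow> 0 < x \<Longrightarrow> (f has_real_derivative D) (at x)"
  using at_within_interior[of x "{0..}"] by simp
lemma cont_from_deriv:
  assumes "\<And>t. t\<ge>0 \<Longrightarrow> \<exists>D. (f has_real_derivative D) (at t within {0..})"
  shows "continuous_on {0..} f"
  unfolding continuous_on_eq_continuous_within using assms DERIV_continuous by fastforce
lemma const_lemma:
  assumes "\<And>t. t\<ge>0 \<Longrightarrow> (f has_real_derivative 0) (at t within {0..})" "t \<ge> 0"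
  shows "f t = f 0"
proof -
  obtain c where "\<forall>x\<in>{0..}. f x = c" using has_field_derivative_zero_constant[of "{0::real..}" f] assms(1)
    by (auto simp: convex_real_interval)
  thus ?thesis using assms(2) by auto
qed
lemma ratio_lemma:
  assumes "(f has_real_derivative k*f x) (at x within S)" "(g has_real_derivative k*g x) (at x within S)" "g x \<noteq> 0"
  shows "((\<lambda>t. f t/g t) has_real_derivative 0) (at x within S)"
  using DERIV_divide[OF assms] by (simp add: algebra_simps)
lemma pos_lemma:
  fixes f :: "real \<Rightarrow> real"
  assumes "continuous_on {0..} f" "f 0 > 0" "\<And>t. t\<ge>0 \<Longrightarrow> f t \<noteq> 0" "t \<ge> 0"
  shows "f t > 0"
proof (rule ccontr)
  assume "\<not> f t > 0"
  then obtain s where "s \<ge> 0" "s \<le> t" "f s = 0"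
    using IVT2'[of f t 0 0] assms continuous_on_subset[OF assms(1), of "{0..t}"] by force
  thus False using assms(3) by auto
qed

locale bsol =
  fixes \<beta> h0 h1 h2 h3 :: real and g0 g1 g2 g3 :: "real \<Rightarrow> real"
  assumes bpos: "\<beta> > 0" and hpos: "h0>0" "h1>0" "h2>0" "h3>0"
  and sol: "bach_solution \<beta> h0 h1 h2 h3 g0 g1 g2 g3"
begin
lemma init: "g0 0 = h0" "g1 0 = h1" "g2 0 = h2" "g3 0 = h3"
  using sol by (auto simp: bach_solution_def)
lemma d0: "t\<ge>0 \<Longrightarrow> (g0 has_real_derivative (- \<beta> * bp (g1 t) (g2 t) * (g0 t)^3)) (at t within {0..})"
  using sol by (auto simp: bach_solution_def)
lemma d1: "t\<ge>0 \<Longrightarrow> (g1 has_real_derivative (- \<beta> * bq (g1 t) (g2 t) * (g0 t)^2 * g1 t)) (at t within {0..})"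
  using sol by (auto simp: bach_solution_def)
lemma d2: "t\<ge>0 \<Longrightarrow> (g2 has_real_derivative (- \<beta> * bq (g2 t) (g1 t) * (g0 t)^2 * g2 t)) (at t within {0..})"
  using sol by (auto simp: bach_solution_def)
lemma d3: "t\<ge>0 \<Longrightarrow> (g3 has_real_derivative (3 * \<beta> * bp (g1 t) (g2 t) * (g0 t)^2 * g3 t)) (at t within {0..})"
  using sol by (auto simp: bach_solution_def)
lemma dd0: "t\<ge>0 \<Longrightarrow> D = - \<beta> * bp (g1 t) (g2 t) * (g0 t)^3 \<Longrightarrow> (g0 has_real_derivative D) (at t within {0..})"
  using d0 by simp
lemma dd1: "t\<ge>0 \<Longrightarrow> D = - \<beta> * bq (g1 t) (g2 t) * (g0 t)^2 * g1 t \<Longrightarrow> (g1 has_real_derivative D) (at t within {0..})"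
  using d1 by simp
lemma dd2: "t\<ge>0 \<Longrightarrow> D = - \<beta> * bq (g2 t) (g1 t) * (g0 t)^2 * g2 t \<Longrightarrow> (g2 has_real_derivative D) (at t within {0..})"
  using d2 by simp
lemma dd3: "t\<ge>0 \<Longrightarrow> D = 3 * \<beta> * bp (g1 t) (g2 t) * (g0 t)^2 * g3 t \<Longrightarrow> (g3 has_real_derivative D) (at t within {0..})"
  using d3 by simp
lemma cont: "continuous_on {0..} g0" "continuous_on {0..} g1" "continuous_on {0..} g2" "continuous_on {0..} g3"
  using cont_from_deriv d0 d1 d2 d3 by blast+

lemma prod_const: assumes "t\<ge>0" shows "g0 t*g1 t*g2 t*g3 t = h0*h1*h2*h3"
proof -
  have "((\<lambda>t. g0 t*g1 t*g2 t*g3 t) has_real_derivative 0) (at t within {0..})" if "t\<ge>0" for t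
    using that by (auto intro!: derivative_eq_intros dd0 dd1 dd2 dd3 simp: bp_def bq_def algebra_simps power2_eq_square power3_eq_cube)
  from const_lemma[OF this assms] show ?thesis by (simp add: init)
qed
lemma pos: assumes "t\<ge>0" shows "g0 t > 0" "g1 t > 0" "g2 t > 0" "g3 t > 0"
proof -
  have nz: "g0 s \<noteq> 0 \<and> g1 s \<noteq> 0 \<and> g2 s \<noteq> 0 \<and> g3 s \<noteq> 0" if "s\<ge>0" for s
    using prod_const[OF that] hpos by auto
  show "g0 t > 0" "g1 t > 0" "g2 t > 0" "g3 t > 0"
    using pos_lemma[OF cont(1)] pos_lemma[OF cont(2)] pos_lemma[OF cont(3)] pos_lemma[OF cont(4)]
      nz init hpos assms by auto
qed

lemma g0sq: assumes "t\<ge>0" shows "g0 t^2 = g1 t*g2 t*h0^2/(h1*h2)"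
proof -
  have "((\<lambda>t. g1 t*g2 t / g0 t^2) has_real_derivative 0) (at t within {0..})" if "t\<ge>0" for t
  proof (rule ratio_lemma[where k="-2*\<beta>*bp (g1 t) (g2 t)*(g0 t)^2"])
    show "((\<lambda>t. g1 t*g2 t) has_real_derivative (-2*\<beta>*bp (g1 t) (g2 t)*(g0 t)^2) * (g1 t*g2 t)) (at t within {0..})"
      using that by (auto intro!: derivative_eq_intros dd0 dd1 dd2 dd3 simp: bp_def bq_def algebra_simps power2_eq_square power3_eq_cube)
    show "((\<lambda>t. g0 t^2) has_real_derivative (-2*\<beta>*bp (g1 t) (g2 t)*(g0 t)^2) * (g0 t^2)) (at t within {0..})"
      using that by (auto intro!: derivative_eq_intros dd0 dd1 dd2 dd3 simp: bp_def bq_def algebra_simps power2_eq_square power3_eq_cube)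
    show "g0 t^2 \<noteq> 0" using pos[OF that] by simp
  qed
  from const_lemma[OF this assms] have "g1 t*g2 t / g0 t^2 = h1*h2/h0^2" by (simp add: init)
  thus ?thesis using pos[OF assms] hpos by (simp add: field_simps)
qed

definition NN where "NN t = (g2 t - g1 t)^4 * (2*(g2 t)^2 + g1 t*g2 t + 2*(g1 t)^2)^3"
definition DD where "DD t = (g1 t*g2 t)^25"

lemma poly_id: fixes x y :: real shows
  "4 * (bq y x * y - bq x y * x) * (2*y^2+x*y+2*x^2) + 3*(y-x)*((4*y+x)*bq y x * y + (y+4*x)*bq x y * x)
   = 50 * bp x y * (y-x) * (2*y^2+x*y+2*x^2)"
  by (simp add: bp_def bq_def algebra_simps eval_nat_numeral)

lemma aux_id: fixes A E Q1 Q2 G x y :: real shows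
  "4*A^3*(-\<beta>*Q1*G*y - (-\<beta>*Q2*G*x))*E^3 + A^4*(3*E^2*((4*y+x)*(-\<beta>*Q1*G*y) + (y+4*x)*(-\<beta>*Q2*G*x)))
   = -\<beta>*G*A^3*E^2*(4*(Q1*y - Q2*x)*E + 3*A*((4*y+x)*Q1*y + (y+4*x)*Q2*x))"
  by (simp add: algebra_simps eval_nat_numeral)

lemma aux2: fixes A E P G :: real shows
  "-\<beta>*G*A^3*E^2*(50*P*A*E) = (-50*\<beta>*P*G)*(A^4*E^3)"
  by (simp add: algebra_simps eval_nat_numeral)

lemma pow_der: assumes "(f has_real_derivative k * f t) (at t within S)" "n > 0"
  shows "((\<lambda>x. f x ^ n) has_real_derivative (of_nat n * k) * f t ^ n) (at t within S)"
proof -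
  have eq: "of_nat n * ((k * f t) * f t ^ (n - Suc 0)) = (of_nat n * k) * f t ^ n"
    using power_minus_mult[OF assms(2), of "f t"] by (simp add: algebra_simps)
  from DERIV_power[OF assms(1), of n] show ?thesis unfolding eq .
qed

lemma Q_const: assumes "t\<ge>0" shows "NN t / DD t = NN 0 / DD 0"
proof -
  have "((\<lambda>t. NN t / DD t) has_real_derivative 0) (at t within {0..})" if "t\<ge>0" for t
  proof (rule ratio_lemma[where k="-50*\<beta>*bp (g1 t) (g2 t)*(g0 t)^2"])
    let ?x = "g1 t" and ?y = "g2 t"
    have der: "((\<lambda>t. NN t) has_real_derivative 
       4*(?y-?x)^3*(- \<beta> * bq ?y ?x * (g0 t)^2 * ?y - (- \<beta> * bq ?x ?y * (g0 t)^2 * ?x)) * (2*?y^2+?x*?y+2*?x^2)^3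
       + (?y-?x)^4 * (3 * (2*?y^2+?x*?y+2*?x^2)^2 * ((4*?y+?x)*(- \<beta> * bq ?y ?x * (g0 t)^2 * ?y) + (?y+4*?x)*(- \<beta> * bq ?x ?y * (g0 t)^2 * ?x)))) (at t within {0..})"
      unfolding NN_def[abs_def] using that
      by (auto intro!: derivative_eq_intros dd0 dd1 dd2 dd3 simp: algebra_simps power2_eq_square power3_eq_cube)
    have "4*(?y-?x)^3*(- \<beta> * bq ?y ?x * (g0 t)^2 * ?y - (- \<beta> * bq ?x ?y * (g0 t)^2 * ?x)) * (2*?y^2+?x*?y+2*?x^2)^3
       + (?y-?x)^4 * (3 * (2*?y^2+?x*?y+2*?x^2)^2 * ((4*?y+?x)*(- \<beta> * bq ?y ?x * (g0 t)^2 * ?y) + (?y+4*?x)*(- \<beta> * bq ?x ?y * (g0 t)^2 * ?x)))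
       = - \<beta> * (g0 t)^2 * (?y-?x)^3 * (2*?y^2+?x*?y+2*?x^2)^2 * 
         (4 * (bq ?y ?x * ?y - bq ?x ?y * ?x) * (2*?y^2+?x*?y+2*?x^2) + 3*(?y-?x)*((4*?y+?x)*bq ?y ?x * ?y + (?y+4*?x)*bq ?x ?y * ?x))"
      by (rule aux_id)
    also have "\<dots> = - \<beta> * (g0 t)^2 * (?y-?x)^3 * (2*?y^2+?x*?y+2*?x^2)^2 * 
         (50 * bp ?x ?y * (?y-?x) * (2*?y^2+?x*?y+2*?x^2))" by (simp only: poly_id)
    also have "\<dots> = (-50*\<beta>*bp (g1 t) (g2 t)*(g0 t)^2) * NN t"
      unfolding NN_def by (rule aux2)
    finally have eqf: "4*(?y-?x)^3*(- \<beta> * bq ?y ?x * (g0 t)^2 * ?y - (- \<beta> * bq ?x ?y * (g0 t)^2 * ?x)) * (2*?y^2+?x*?y+2*?x^2)^3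
       + (?y-?x)^4 * (3 * (2*?y^2+?x*?y+2*?x^2)^2 * ((4*?y+?x)*(- \<beta> * bq ?y ?x * (g0 t)^2 * ?y) + (?y+4*?x)*(- \<beta> * bq ?x ?y * (g0 t)^2 * ?x))) = (-50*\<beta>*bp (g1 t) (g2 t)*(g0 t)^2) * NN t" .
    show "(NN has_real_derivative (-50*\<beta>*bp (g1 t) (g2 t)*(g0 t)^2) * NN t) (at t within {0..})"
      using der unfolding eqf by simp
    have gg: "((\<lambda>t. g1 t*g2 t) has_real_derivative (-2*\<beta>*bp (g1 t) (g2 t)*(g0 t)^2) * (g1 t*g2 t)) (at t within {0..})"
      using that by (auto intro!: derivative_eq_intros dd0 dd1 dd2 dd3 simp: bp_def bq_def algebra_simps power2_eq_square power3_eq_cube)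
    show "(DD has_real_derivative (-50*\<beta>*bp (g1 t) (g2 t)*(g0 t)^2) * DD t) (at t within {0..})"
      unfolding DD_def[abs_def] using pow_der[OF gg, of 25] by (simp add: algebra_simps)
    show "DD t \<noteq> 0" using pos[OF that] by (simp add: DD_def)
  qed
  from const_lemma[OF this assms] show ?thesis .
qed
end


lemma bq_ge: fixes x y :: real assumes "0<x" "x \<le> y" shows "bq y x \<ge> 2*y^4"
proof -
  have "x^4 \<le> y^4" "x^2 \<le> y^2" using assms by (auto intro!: power_mono)
  moreover have "0 \<le> y^2" by simp
  ultimately have "0 \<le> 3*y^2-x^2" by linarith
  hence "x*y*(3*y^2-x^2) \<ge> 0" using assms by simp
  moreover have "bq y x - 2*y^4 = 3*(y^4-x^4) + x*y*(3*y^2-x^2)"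
    by (simp add: bq_def algebra_simps eval_nat_numeral)
  moreover have "3*(y^4-x^4) \<ge> 0" using \<open>x^4 \<le> y^4\<close> by simp
  ultimately have "bq y x - 2*y^4 \<ge> 0" by simp
  thus ?thesis by simp
qed
lemma bq_diff: fixes x y :: real shows "bq y x - bq x y = 4*(y-x)*(2*y^3+3*y^2*x+3*y*x^2+2*x^3)"
  by (simp add: bq_def algebra_simps eval_nat_numeral)
lemma bp_pos: fixes x y :: real shows "0<x \<Longrightarrow> 0<y \<Longrightarrow> bp x y > 0"
  unfolding bp_def by (intro add_pos_pos mult_pos_pos zero_less_power) auto

lemma smono_from_deriv:
  fixes f :: "real \<Rightarrow> real"
  assumes cont: "continuous_on {0..} f" and d: "\<And>t. t>0 \<Longrightarrow> \<exists>D. (f has_real_derivative D) (at t) \<and> D>0"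
  shows "strict_mono_on {0..} f"
proof (rule monotone_onI)
  fix x y :: real assume "x \<in> {0..}" "y \<in> {0..}" "x < y"
  thus "f x < f y"
    using DERIV_pos_imp_increasing_open[of x y f] d continuous_on_subset[OF cont, of "{x..y}"] by auto
qed
lemma santimono_from_deriv:
  fixes f :: "real \<Rightarrow> real"
  assumes cont: "continuous_on {0..} f" and d: "\<And>t. t>0 \<Longrightarrow> \<exists>D. (f has_real_derivative D) (at t) \<and> D<0"
  shows "strict_antimono_on {0..} f"
proof (rule monotone_onI)
  fix x y :: real assume "x \<in> {0..}" "y \<in> {0..}" "x < y"
  thus "f y < f x"
    using DERIV_neg_imp_decreasing_open[of x y f] d continuous_on_subset[OF cont, of "{x..y}"] by auto
qed

lemma root_to0:
  fixes f :: "real \<Rightarrow> real"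
  assumes "((\<lambda>t. f t ^ n) \<longlongrightarrow> 0) at_top" "\<And>t. t \<ge> T \<Longrightarrow> 0 \<le> f t" "n>0"
  shows "(f \<longlongrightarrow> 0) at_top"
proof -
  have "((\<lambda>t. root n (f t ^ n)) \<longlongrightarrow> root n 0) at_top" by (rule tendsto_real_root[OF assms(1)])
  moreover have "eventually (\<lambda>t. root n (f t ^ n) = f t) at_top"
    using eventually_ge_at_top[of T] by eventually_elim (rule real_root_power_cancel[OF assms(3) assms(2)])
  ultimately show ?thesis by (simp add: tendsto_cong)
qed

lemma inv_lin_to0: fixes k :: real assumes "k>0" shows "((\<lambda>t. 1/(k*t)) \<longlongrightarrow> 0) at_top"
proof -
  have "filterlim (\<lambda>t. k*t) at_top at_top"
    using filterlim_tendsto_pos_mult_at_top[OF tendsto_const assms filterlim_ident] .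
  hence "filterlim (\<lambda>t. k*t) at_infinity at_top" using filterlim_at_top_imp_at_infinity by blast
  thus ?thesis using tendsto_divide_0[OF tendsto_const] by blast
qed


context bsol begin

lemma dint0: "t>0 \<Longrightarrow> (g0 has_real_derivative (- \<beta> * bp (g1 t) (g2 t) * (g0 t)^3)) (at t)"
  using d0 deriv_int by simp
lemma dint1: "t>0 \<Longrightarrow> (g1 has_real_derivative (- \<beta> * bq (g1 t) (g2 t) * (g0 t)^2 * g1 t)) (at t)"
  using d1 deriv_int by simp
lemma dint2: "t>0 \<Longrightarrow> (g2 has_real_derivative (- \<beta> * bq (g2 t) (g1 t) * (g0 t)^2 * g2 t)) (at t)"
  using d2 deriv_int by simp
lemma dint3: "t>0 \<Longrightarrow> (g3 has_real_derivative (3 * \<beta> * bp (g1 t) (g2 t) * (g0 t)^2 * g3 t)) (at t)"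
  using d3 deriv_int by simp

lemma DD_pos: "t\<ge>0 \<Longrightarrow> DD t > 0" using pos by (simp add: DD_def)
lemma E_pos: "t\<ge>0 \<Longrightarrow> 2*(g2 t)^2 + g1 t*g2 t + 2*(g1 t)^2 > 0"
  using pos[of t] by (intro add_pos_pos) auto
lemma NN_eq: "t\<ge>0 \<Longrightarrow> NN t = DD t * (NN 0 / DD 0)"
  using Q_const[of t] DD_pos[of t] by (simp add: field_simps)

lemma eq_case: assumes "h1 = h2" "t\<ge>0" shows "g1 t = g2 t"
proof -
  have "NN 0 = 0" using assms init by (simp add: NN_def)
  hence "NN t = 0" using NN_eq[OF assms(2)] by simp
  thus ?thesis using E_pos[OF assms(2)] by (simp add: NN_def)
qed

lemma lt_case: assumes "h1 < h2" "t\<ge>0" shows "g1 t < g2 t"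
proof -
  have "NN 0 > 0" using assms init E_pos[of 0] by (simp add: NN_def)
  hence nz: "NN s \<noteq> 0" if "s \<ge> 0" for s using NN_eq[OF that] DD_pos[of 0] DD_pos[OF that] by simp
  have "g2 t - g1 t > 0"
  proof (rule pos_lemma[where f="\<lambda>t. g2 t - g1 t"])
    show "continuous_on {0..} (\<lambda>t. g2 t - g1 t)" using cont by (intro continuous_intros)
    show "g2 0 - g1 0 > 0" using assms init by simp
    show "g2 s - g1 s \<noteq> 0" if "s\<ge>0" for s using nz[OF that] by (auto simp: NN_def)
  qed fact
  thus ?thesis by simp
qed

lemma g3_mono: "strict_mono_on {0..} g3"
proof (rule smono_from_deriv[OF cont(4)])
  fix t :: real assume "t>0"
  thus "\<exists>D. (g3 has_real_derivative D) (at t) \<and> D > 0"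
    using dint3[of t] pos[of t] bpos bp_pos[of "g1 t" "g2 t"] by (intro exI[of _ "3 * \<beta> * bp (g1 t) (g2 t) * (g0 t)^2 * g3 t"]) auto
qed

lemma g2_anti: assumes "h1 < h2" shows "strict_antimono_on {0..} g2"
proof (rule santimono_from_deriv[OF cont(3)])
  fix t :: real assume t: "t>0"
  have "bq (g2 t) (g1 t) \<ge> 2*(g2 t)^4" using bq_ge[of "g1 t" "g2 t"] pos[of t] lt_case[OF assms, of t] t by auto
  moreover have "2*(g2 t)^4 > 0" using pos[of t] t by simp
  ultimately have "bq (g2 t) (g1 t) > 0" by linarith
  hence "\<beta> * bq (g2 t) (g1 t) * (g0 t)^2 * g2 t > 0" using pos[of t] t bpos by simp
  thus "\<exists>D. (g2 has_real_derivative D) (at t) \<and> D < 0"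
    using dint2[OF t] pos[of t] bpos t by (intro exI[of _ "- \<beta> * bq (g2 t) (g1 t) * (g0 t)^2 * g2 t"]) auto
qed

lemma ratio_mono: assumes "h1 < h2" shows "strict_mono_on {0..} (\<lambda>t. g1 t / g2 t)"
proof (rule smono_from_deriv)
  show "continuous_on {0..} (\<lambda>t. g1 t / g2 t)" by (intro continuous_intros cont) (use pos(3) in force)
  fix t :: real assume t: "t>0"
  let ?x = "g1 t" and ?y = "g2 t"
  have D: "((\<lambda>t. g1 t / g2 t) has_real_derivative
     ((- \<beta> * bq ?x ?y * (g0 t)^2 * ?x) * ?y - ?x * (- \<beta> * bq ?y ?x * (g0 t)^2 * ?y)) / (?y * ?y)) (at t)"
    using DERIV_divide[OF dint1[OF t] dint2[OF t]] pos[of t] t by simp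
  have eq: "(- \<beta> * bq ?x ?y * (g0 t)^2 * ?x) * ?y - ?x * (- \<beta> * bq ?y ?x * (g0 t)^2 * ?y)
      = \<beta> * (g0 t)^2 * ?x * ?y * (bq ?y ?x - bq ?x ?y)" by (simp add: algebra_simps)
  have "bq ?y ?x - bq ?x ?y > 0" unfolding bq_diff using pos[of t] t lt_case[OF assms, of t]
    by (intro mult_pos_pos add_pos_pos) auto
  hence "\<beta> * (g0 t)^2 * ?x * ?y * (bq ?y ?x - bq ?x ?y) / (?y * ?y) > 0" using pos[of t] t bpos by simp
  thus "\<exists>D. ((\<lambda>t. g1 t / g2 t) has_real_derivative D) (at t) \<and> D > 0" using D unfolding eq by blast
qed

lemma eta_id: assumes "h1 < h2" "t\<ge>0"
  shows "(g1 t * g2 t)^25 = ((h1 * h2)^25 / ((h2 - h1)^4 * (2*h2^2 + h1*h2 + 2*h1^2)^3)) *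
     (g2 t - g1 t)^4 * (2 * (g2 t)^2 + g1 t * g2 t + 2 * (g1 t)^2)^3"
proof -
  have "NN 0 > 0" using assms init E_pos[of 0] by (simp add: NN_def)
  have "DD t = NN t * (DD 0 / NN 0)" using NN_eq[OF assms(2)] \<open>NN 0 > 0\<close> DD_pos[of 0] by (simp add: field_simps)
  thus ?thesis using init by (simp add: DD_def NN_def algebra_simps)
qed

end

context bsol begin

lemma decay:
  assumes le: "\<And>t. t\<ge>0 \<Longrightarrow> g1 t \<le> g2 t" and ge: "\<And>t. t\<ge>0 \<Longrightarrow> h1/h2 * g2 t \<le> g1 t"
  shows "(g2 \<longlongrightarrow> 0) at_top"
proof -
  define c where "c = h0^2/(h1*h2)"
  define k where "k = 12*\<beta>*c*(h1/h2)"
  have cpos: "c > 0" and kpos: "k > 0" using hpos bpos by (auto simp: c_def k_def)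
  define W where "W t = inverse (g2 t ^ 6) - k*t" for t
  have Wd: "\<exists>D. (W has_real_derivative D) (at t) \<and> D \<ge> 0" if t: "t>0" for t
  proof -
    let ?k2 = "- \<beta> * bq (g2 t) (g1 t) * (g0 t)^2"
    have "(g2 has_real_derivative ?k2 * g2 t) (at t)" using dint2[OF t] by (simp add: algebra_simps)
    from pow_der[OF this, of 6] have p6: "((\<lambda>x. g2 x ^ 6) has_real_derivative (6 * ?k2) * g2 t ^ 6) (at t)" by simp
    have nz: "g2 t ^ 6 \<noteq> 0" using pos[of t] t by simp
    have
      "((\<lambda>x. inverse (g2 x ^ 6)) has_real_derivative - ((6 * ?k2) * g2 t ^ 6 * inverse ((g2 t ^ 6) ^ Suc (Suc 0)))) (at t)"
      using DERIV_inverse_fun[OF p6 nz] by blast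
    moreover have "- ((6 * ?k2) * g2 t ^ 6 * inverse ((g2 t ^ 6) ^ Suc (Suc 0))) = 6*\<beta>* bq (g2 t) (g1 t) * (g0 t)^2 / g2 t ^ 6"
      using pos[of t] t by (simp add: field_simps)
    ultimately have inv: "((\<lambda>x. inverse (g2 x ^ 6)) has_real_derivative 6*\<beta>* bq (g2 t) (g1 t) * (g0 t)^2 / g2 t ^ 6) (at t)"
      by simp
    have "((\<lambda>t. k*t) has_real_derivative k) (at t)" by (auto intro!: derivative_eq_intros)
    from DERIV_diff[OF inv this] have d: "(W has_real_derivative 6*\<beta>* bq (g2 t) (g1 t) * (g0 t)^2 / g2 t ^ 6 - k) (at t)"
      unfolding W_def[abs_def] .
    have b1: "bq (g2 t) (g1 t) \<ge> 2*(g2 t)^4" using bq_ge[of "g1 t" "g2 t"] pos[of t] le[of t] t by auto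
    have "g0 t^2 = c * (g1 t * g2 t)" using g0sq[of t] t by (simp add: c_def)
    moreover have pr: "g1 t * g2 t \<ge> (h1/h2 * g2 t) * g2 t" using ge[of t] pos[of t] t by (intro mult_right_mono) auto
    have "c*((h1/h2 * g2 t) * g2 t) \<le> c*(g1 t * g2 t)" by (rule mult_left_mono[OF pr]) (use cpos in simp)
    ultimately have "c*((h1/h2 * g2 t) * g2 t) \<le> g0 t^2" by simp
    moreover have "c * (h1/h2) * (g2 t)^2 = c*((h1/h2 * g2 t) * g2 t)" by (simp add: power2_eq_square)
    ultimately have b2: "g0 t^2 \<ge> c * (h1/h2) * (g2 t)^2" by linarith
    have "bq (g2 t) (g1 t) * g0 t^2 \<ge> (2*(g2 t)^4) * (c * (h1/h2) * (g2 t)^2)"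
      using b1 b2 hpos cpos by (intro mult_mono) (auto intro: order_trans[OF _ b1])
    hence "6*\<beta>*(bq (g2 t) (g1 t) * g0 t^2) \<ge> 6*\<beta>*((2*(g2 t)^4) * (c * (h1/h2) * (g2 t)^2))"
      by (rule mult_left_mono) (use bpos in simp)
    moreover have "6*\<beta>*((2*(g2 t)^4) * (c * (h1/h2) * (g2 t)^2)) = k * g2 t ^ 6"
      by (simp add: k_def algebra_simps eval_nat_numeral)
    ultimately have "6*\<beta>* bq (g2 t) (g1 t) * (g0 t)^2 \<ge> k * g2 t ^ 6" by (simp add: algebra_simps)
    hence "6*\<beta>* bq (g2 t) (g1 t) * (g0 t)^2 / g2 t ^ 6 \<ge> k" using pos[of t] t by (simp add: field_simps)
    thus ?thesis using d by (intro exI[of _ "6*\<beta>* bq (g2 t) (g1 t) * (g0 t)^2 / g2 t ^ 6 - k"]) auto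
  qed
  have bound: "g2 t ^ 6 \<le> 1/(k*t)" if t: "t>0" for t
  proof -
    have "continuous_on {0..t} W" unfolding W_def
      by (intro continuous_intros continuous_on_subset[OF cont(3)]) (use pos(3) in force)+
    hence "W 0 \<le> W t" using DERIV_nonneg_imp_increasing_open[of 0 t W] Wd t by auto
    hence "inverse (g2 t ^ 6) \<ge> k*t + inverse (h2^6)" using init by (simp add: W_def)
    moreover have "inverse (h2^6) > 0" using hpos by simp
    ultimately have "inverse (g2 t ^ 6) \<ge> k*t" by linarith
    hence "inverse (inverse (g2 t ^ 6)) \<le> inverse (k*t)" using kpos t by (intro le_imp_inverse_le) auto
    thus ?thesis using pos[of t] t by (simp add: field_simps)
  qed
  have "((\<lambda>t. g2 t ^ 6) \<longlongrightarrow> 0) at_top"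
  proof (rule tendsto_sandwich[OF _ _ tendsto_const inv_lin_to0[OF kpos]])
    show "\<forall>\<^sub>F t in at_top. 0 \<le> g2 t ^ 6" using eventually_ge_at_top[of 0]
      by eventually_elim (use pos(3) in force)
    show "\<forall>\<^sub>F t in at_top. g2 t ^ 6 \<le> 1/(k*t)" using eventually_gt_at_top[of 0]
      by eventually_elim (rule bound)
  qed
  thus ?thesis by (rule root_to0[where T=0]) (use pos(3) in force)+
qed

lemma limits_common:
  assumes le: "\<And>t. t\<ge>0 \<Longrightarrow> g1 t \<le> g2 t" and ge: "\<And>t. t\<ge>0 \<Longrightarrow> h1/h2 * g2 t \<le> g1 t"
  shows "(g0 \<longlongrightarrow> 0) at_top \<and> (g1 \<longlongrightarrow> 0) at_top \<and> (g2 \<longlongrightarrow> 0) at_top \<and> filterlim g3 at_top at_top"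
proof -
  have l2: "(g2 \<longlongrightarrow> 0) at_top" by (rule decay[OF le ge])
  have l1: "(g1 \<longlongrightarrow> 0) at_top"
  proof (rule tendsto_sandwich[OF _ _ tendsto_const l2])
    show "\<forall>\<^sub>F t in at_top. 0 \<le> g1 t" using eventually_ge_at_top[of 0]
      by eventually_elim (use pos(2) in force)
    show "\<forall>\<^sub>F t in at_top. g1 t \<le> g2 t" using eventually_ge_at_top[of 0]
      by eventually_elim (rule le)
  qed
  have "((\<lambda>t. g1 t*g2 t*h0^2/(h1*h2)) \<longlongrightarrow> 0*0*h0^2/(h1*h2)) at_top"
    by (intro tendsto_intros l1 l2) (use hpos in auto)
  moreover have "\<forall>\<^sub>F t in at_top. g1 t*g2 t*h0^2/(h1*h2) = g0 t ^ 2"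
    using eventually_ge_at_top[of 0] by eventually_elim (simp add: g0sq)
  ultimately have "((\<lambda>t. g0 t ^ 2) \<longlongrightarrow> 0) at_top" by (simp add: tendsto_cong)
  hence l0: "(g0 \<longlongrightarrow> 0) at_top" by (rule root_to0[where T=0]) (use pos(1) in force)+
  have "((\<lambda>t. g0 t*g1 t*g2 t/(h0*h1*h2*h3)) \<longlongrightarrow> 0*0*0/(h0*h1*h2*h3)) at_top"
    by (intro tendsto_intros l0 l1 l2) (use hpos in auto)
  hence "((\<lambda>t. g0 t*g1 t*g2 t/(h0*h1*h2*h3)) \<longlongrightarrow> 0) at_top" by simp
  moreover have "\<forall>\<^sub>F t in at_top. 0 < g0 t*g1 t*g2 t/(h0*h1*h2*h3)"
    using eventually_ge_at_top[of 0] by eventually_elim (use pos hpos in simp)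
  ultimately have "LIM t at_top. inverse (g0 t*g1 t*g2 t/(h0*h1*h2*h3)) :> at_top"
    by (rule filterlim_inverse_at_top)
  moreover have "\<forall>\<^sub>F t in at_top. inverse (g0 t*g1 t*g2 t/(h0*h1*h2*h3)) = g3 t"
    using eventually_ge_at_top[of 0]
  proof eventually_elim
    case (elim t)
    thus ?case using prod_const[OF elim] pos[OF elim] by (simp add: field_simps)
  qed
  ultimately have "filterlim g3 at_top at_top" using filterlim_cong by fastforce
  thus ?thesis using l0 l1 l2 by blast
qed

end

context bsol begin

lemma eq_formulas: assumes h: "h1 = h2" and t: "t\<ge>0"
  defines "\<mu> \<equiv> h0^3 * h3 / (h0 * h1 * h2 * h3)"
  shows "g0 t = sqrt \<mu> * (24 * \<mu> * \<beta> * t + h1 powr (-6)) powr (-1/6) \<and>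
         g1 t = (24 * \<mu> * \<beta> * t + h1 powr (-6)) powr (-1/6) \<and>
         g2 t = (24 * \<mu> * \<beta> * t + h1 powr (-6)) powr (-1/6) \<and>
         g3 t = h1^3 * h3 * (24 * \<mu> * \<beta> * t + h1 powr (-6)) powr (1/2)"
proof -
  have mu: "\<mu> = h0^2/h1^2" using hpos h by (simp add: \<mu>_def power2_eq_square power3_eq_cube)
  have mupos: "\<mu> > 0" using mu hpos by simp
  have g12: "g2 s = g1 s" if "s\<ge>0" for s using eq_case[OF h that] by simp
  have g0s: "g0 s^2 = \<mu> * g1 s^2" if "s\<ge>0" for s
    using g0sq[OF that] g12[OF that] h hpos by (simp add: mu power2_eq_square)
  define Y where "Y = (\<lambda>s. inverse (g1 s ^ 6) - 24*\<beta>*\<mu> * s)"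
  have "(Y has_real_derivative 0) (at s within {0..})" if s: "s\<ge>0" for s
  proof -
    let ?k1 = "- \<beta> * bq (g1 s) (g2 s) * (g0 s)^2"
    have "(g1 has_real_derivative ?k1 * g1 s) (at s within {0..})" using d1[OF s] by (simp add: algebra_simps)
    from pow_der[OF this, of 6] have p6: "((\<lambda>x. g1 x ^ 6) has_real_derivative (6 * ?k1) * g1 s ^ 6) (at s within {0..})" by simp
    have nz: "g1 s ^ 6 \<noteq> 0" using pos[OF s] by simp
    have inv: "((\<lambda>x. inverse (g1 x ^ 6)) has_real_derivative - ((6 * ?k1) * g1 s ^ 6 * inverse ((g1 s ^ 6) ^ Suc (Suc 0)))) (at s within {0..})"
      using DERIV_inverse_fun[OF p6 nz] by blast
    have "- ((6 * ?k1) * g1 s ^ 6 * inverse ((g1 s ^ 6) ^ Suc (Suc 0))) = 6*\<beta>* bq (g1 s) (g2 s) * (g0 s)^2 / g1 s ^ 6"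
      using pos[OF s] by (simp add: field_simps)
    also have "\<dots> = 24*\<beta>*\<mu>" using pos[OF s] g0s[OF s] g12[OF s]
      by (simp add: bq_def field_simps eval_nat_numeral)
    finally have eqc: "- ((6 * ?k1) * g1 s ^ 6 * inverse ((g1 s ^ 6) ^ Suc (Suc 0))) = 24*\<beta>*\<mu>" .
    have inv': "((\<lambda>x. inverse (g1 x ^ 6)) has_real_derivative 24*\<beta>*\<mu>) (at s within {0..})"
      using inv unfolding eqc .
    have "((\<lambda>s. 24*\<beta>*\<mu> * s) has_real_derivative 24*\<beta>*\<mu>) (at s within {0..})" by (auto intro!: derivative_eq_intros)
    from DERIV_diff[OF inv' this] show ?thesis unfolding Y_def by simp
  qed
  from const_lemma[OF this t] have "Y t = Y 0" .
  hence Z: "inverse (g1 t ^ 6) = 24 * \<mu> * \<beta> * t + h1 powr (-6)"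
    using init hpos by (simp add: Y_def powr_neg_numeral divide_inverse algebra_simps)
  define x where "x = g1 t"
  have xpos: "x > 0" using pos[OF t] by (simp add: x_def)
  have Zx: "24 * \<mu> * \<beta> * t + h1 powr (-6) = x powr (-6)"
    using Z xpos by (simp add: x_def powr_neg_numeral divide_inverse)
  have e1: "(24 * \<mu> * \<beta> * t + h1 powr (-6)) powr (-1/6) = x"
    unfolding Zx powr_powr using xpos by simp
  have e2: "(24 * \<mu> * \<beta> * t + h1 powr (-6)) powr (1/2) = 1/x^3"
    unfolding Zx powr_powr using xpos by (simp add: powr_neg_numeral)
  have sm: "sqrt \<mu> = h0/h1" using hpos by (simp add: mu real_sqrt_divide)
  have "g0 t^2 = (h0/h1 * x)^2" using g0s[OF t] by (simp add: x_def mu power_mult_distrib power_divide)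
  hence g0x: "g0 t = h0/h1 * x" using pos[OF t] xpos hpos
    by (metis divide_pos_pos less_eq_real_def mult_pos_pos power2_eq_imp_eq)
  have g3x: "g3 t = h1^3 * h3 * (1/x^3)"
    using prod_const[OF t] g0x g12[OF t] xpos hpos h by (simp add: x_def field_simps eval_nat_numeral)
  show ?thesis using e1 e2 sm g0x g3x g12[OF t] by (simp add: x_def)
qed

lemma lt_ratio_limit: assumes h: "h1 < h2" shows "((\<lambda>t. g1 t / g2 t) \<longlongrightarrow> 1) at_top"
proof -
  have le: "g1 t \<le> g2 t" if "t\<ge>0" for t using lt_case[OF h that] by simp
  have ge: "h1/h2 * g2 t \<le> g1 t" if t: "t\<ge>0" for t
  proof -
    have "g1 0 / g2 0 \<le> g1 t / g2 t"
      using ratio_mono[OF h] t by (cases "t = 0") (auto dest: monotone_onD[of _ _ _ _ 0 t])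
    thus ?thesis using init pos[OF t] by (simp add: field_simps)
  qed
  have l2: "(g2 \<longlongrightarrow> 0) at_top" using limits_common[OF le ge] by blast
  define K where "K = NN 0 / DD 0"
  have Kpos: "K \<ge> 0" using DD_pos[of 0] E_pos[of 0] by (simp add: K_def NN_def)
  have bnd: "(1 - g1 t / g2 t)^4 \<le> K/8 * g2 t ^ 40" if t: "t\<ge>0" for t
  proof -
    let ?x = "g1 t" and ?y = "g2 t" and ?E = "2*(g2 t)^2 + g1 t*g2 t + 2*(g1 t)^2"
    have xy: "0 < ?x" "?x < ?y" using pos[OF t] lt_case[OF h t] by auto
    have "?E \<ge> 2*?y^2" using xy by simp
    hence "?E^3 \<ge> (2*?y^2)^3" by (rule power_mono) simp
    hence a: "(?y-?x)^4 * (8*?y^6) \<le> NN t" unfolding NN_def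
      by (intro mult_left_mono) (auto simp: power_mult_distrib power_mult[symmetric])
    have "DD t \<le> (?y*?y)^25" unfolding DD_def using xy by (intro power_mono mult_right_mono) auto
    hence "DD t * K \<le> (?y*?y)^25 * K" using Kpos by (rule mult_right_mono)
    hence "NN t \<le> K * (?y*?y)^25" using NN_eq[OF t] by (simp add: K_def mult.commute)
    with a have b: "(?y-?x)^4 * (8*?y^6) \<le> K * ?y^50" by (simp add: power_mult_distrib power_add[symmetric])
    have c: "(?y-?x)^4 = (1 - ?x/?y)^4 * ?y^4"
    proof -
      have "?y - ?x = (1 - ?x/?y) * ?y" using xy by (simp add: field_simps)
      thus ?thesis by (simp add: power_mult_distrib)
    qed
    have pw1: "(A::real)*Y^4*(8*Y^6) = A*(8*Y^10)" for A Y by (simp add: eval_nat_numeral algebra_simps)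
    have pw2: "(K/8*Y^40)*(8*Y^10) = K*(Y::real)^50" for Y by (simp add: eval_nat_numeral algebra_simps)
    have "(1 - ?x/?y)^4 * (8 * ?y^10) \<le> (K/8 * ?y^40) * (8 * ?y^10)"
      using b unfolding c pw1 pw2 .
    thus ?thesis by (rule mult_right_le_imp_le) (use xy in simp)
  qed
  have "((\<lambda>t. K/8 * g2 t ^ 40) \<longlongrightarrow> K/8 * 0^40) at_top" by (intro tendsto_intros l2)
  hence up: "((\<lambda>t. K/8 * g2 t ^ 40) \<longlongrightarrow> 0) at_top" by simp
  have "((\<lambda>t. (1 - g1 t / g2 t)^4) \<longlongrightarrow> 0) at_top"
  proof (rule tendsto_sandwich[OF _ _ tendsto_const up])
    show "\<forall>\<^sub>F t in at_top. 0 \<le> (1 - g1 t / g2 t)^4" by simp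
    show "\<forall>\<^sub>F t in at_top. (1 - g1 t / g2 t)^4 \<le> K/8 * g2 t ^ 40" using eventually_ge_at_top[of 0]
      by eventually_elim (rule bnd)
  qed
  hence "((\<lambda>t. 1 - g1 t / g2 t) \<longlongrightarrow> 0) at_top"
    by (rule root_to0[where T=0]) (use le pos in \<open>auto simp: field_simps\<close>)
  hence "((\<lambda>t. 1 - (1 - g1 t / g2 t)) \<longlongrightarrow> 1 - 0) at_top" by (intro tendsto_intros)
  thus ?thesis by simp
qed

end


lemma ode_solve:
  fixes F :: "real \<Rightarrow> real" and r0 C :: real
  assumes r0: "0 < r0" "r0 < 1"
    and Fc: "continuous_on {0<..<1} F"
    and Fp: "\<And>r. 0 < r \<Longrightarrow> r < 1 \<Longrightarrow> F r > 0"
    and Cp: "C > 0"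
    and Fb: "\<And>r. r0 \<le> r \<Longrightarrow> r < 1 \<Longrightarrow> F r \<le> C * (1 - r)"
  shows "\<exists>R. R 0 = r0 \<and> (\<forall>t\<ge>0. 0 < R t \<and> R t < 1 \<and> (R has_real_derivative F (R t)) (at t))"
proof -
  define a where "a = r0/2"
  have a: "0 < a" "a < r0" using r0 by (auto simp: a_def)
  define w where "w r = 1 / F r" for r
  have wc: "continuous_on {0<..<1} w" unfolding w_def[abs_def]
    by (intro continuous_intros Fc) (use Fp in force)
  define T where "T r = integral {a..r} w - integral {a..r0} w" for r
  have Td: "(T has_real_derivative w r) (at r)" if r: "a < r" "r < 1" for r
  proof -
    define b where "b = (r+1)/2"
    have b: "r < b" "b < 1" using r by (auto simp: b_def)
    have "continuous_on {a..b} w" using a b by (intro continuous_on_subset[OF wc]) auto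
    have rin: "r \<in> {a..b}" using r b by auto
    have der: "((\<lambda>x. integral {a..x} w) has_real_derivative w r) (at r within {a..b})"
      by (rule integral_has_real_derivative[OF \<open>continuous_on {a..b} w\<close> rin])
    have int: "r \<in> interior {a..b}" using r b by auto
    have "((\<lambda>x. integral {a..x} w) has_real_derivative w r) (at r)"
      using der unfolding at_within_interior[OF int] .
    from DERIV_diff[OF this DERIV_const[of "integral {a..r0} w"]] show ?thesis
      unfolding T_def[abs_def] by simp
  qed
  have wpos: "w r > 0" if "a < r" "r < 1" for r using Fp[of r] that a by (simp add: w_def)
  have Tmono: "T x < T y" if "a < x" "x < y" "y < 1" for x y
    using DERIV_pos_imp_increasing[of x y T] that Td wpos by (meson less_le_trans le_less_trans)
  have Tinj: "x = y" if "a < x" "x < 1" "a < y" "y < 1" "T x = T y" for x y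
    using Tmono[of x y] Tmono[of y x] that by (cases x y rule: linorder_cases) auto
  have Tcont: "isCont T r" if "a < r" "r < 1" for r using Td[OF that] by (rule DERIV_isCont)
  have T0: "T r0 = 0" by (simp add: T_def)
  have Tlow: "T r \<ge> (ln (1 - r0) - ln (1 - r)) / C" if "r0 \<le> r" "r < 1" for r
  proof -
    define V where "V x = T x + ln (1 - x) / C" for x
    have "V r0 \<le> V r"
    proof (rule DERIV_nonneg_imp_nondecreasing[OF that(1)])
      fix x assume x: "r0 \<le> x" "x \<le> r"
      have "(V has_real_derivative w x + (- 1 / (1 - x)) / C) (at x)"
        unfolding V_def[abs_def] using x that a Cp
        by (auto intro!: derivative_eq_intros Td simp: field_simps)
      moreover have "w x + (- 1 / (1 - x)) / C \<ge> 0"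
      proof -
        have "F x \<le> C * (1 - x)" "F x > 0" using Fb[of x] Fp[of x] x that a by auto
        hence "1 / (C * (1 - x)) \<le> 1 / F x" by (intro divide_left_mono) (use x that Cp in auto)
        thus ?thesis using x that Cp by (simp add: w_def field_simps)
      qed
      ultimately show "\<exists>y. (V has_real_derivative y) (at x) \<and> 0 \<le> y" by blast
    qed
    thus ?thesis using T0 unfolding V_def diff_divide_distrib by linarith
  qed
  define a1 where "a1 = (a + r0)/2"
  have a1: "a < a1" "a1 < r0" using a by (auto simp: a1_def)
  define tlo where "tlo = T a1"
  have tlo: "tlo < 0" using Tmono[of a1 r0] a1 r0 T0 by (simp add: tlo_def)
  have surj: "\<exists>r. a < r \<and> r < 1 \<and> T r = y" if y: "tlo \<le> y" for y
  proof (cases "y \<le> 0")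
    case True
    have "continuous_on {a1..r0} T" using a1 r0 Tcont by (intro continuous_at_imp_continuous_on) auto
    then obtain r where "a1 \<le> r" "r \<le> r0" "T r = y"
      using IVT'[of T a1 y r0] True y a1 T0 by (auto simp: tlo_def)
    thus ?thesis using a1 r0 by (intro exI[of _ r]) auto
  next
    case False
    define r1 where "r1 = 1 - (1 - r0) * exp (- C * y)"
    have e: "exp (- C * y) \<le> 1" using False Cp by simp
    have "(1 - r0) * exp (- C * y) \<le> (1 - r0) * 1" by (rule mult_left_mono[OF e]) (use r0 in simp)
    moreover have "(1 - r0) * exp (- C * y) > 0" using r0 by simp
    ultimately have r1: "r0 \<le> r1" "r1 < 1" by (auto simp: r1_def)
    have "ln (1 - r1) = ln (1 - r0) - C * y" using r0 by (simp add: r1_def ln_mult)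
    hence "(ln (1 - r0) - ln (1 - r1)) / C = y" using Cp by simp
    hence "T r1 \<ge> y" using Tlow[OF r1] by simp
    moreover have "continuous_on {r0..r1} T" using a r0 r1 Tcont by (intro continuous_at_imp_continuous_on) auto
    ultimately obtain r where "r0 \<le> r" "r \<le> r1" "T r = y"
      using IVT'[of T r0 y r1] False r1 T0 by auto
    thus ?thesis using a r1 r0 by (intro exI[of _ r]) auto
  qed
  define R where "R y = (THE r. a < r \<and> r < 1 \<and> T r = y)" for y
  have R: "a < R y \<and> R y < 1 \<and> T (R y) = y" if yy: "tlo \<le> y" for y
  proof -
    obtain r where r: "a < r" "r < 1" "T r = y" using surj[OF yy] by blast
    have "R y = r" unfolding R_def using r Tinj by (intro the_equality) auto
    thus ?thesis using r by simp
  qed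
  have RT: "R (T z) = z" if "a1 \<le> z" "z < 1" for z
  proof -
    have "tlo \<le> T z" using Tmono[of a1 z] that a1 by (cases "z = a1") (auto simp: tlo_def)
    hence "a < R (T z) \<and> R (T z) < 1 \<and> T (R (T z)) = T z" by (rule R)
    thus ?thesis using Tinj[of "R (T z)" z] that a1 by auto
  qed
  have Rd: "(R has_real_derivative F (R t)) (at t)" if t: "t \<ge> 0" for t
  proof -
    have Rt: "a < R t" "R t < 1" "T (R t) = t" using R[of t] t tlo by auto
    have Ra1: "a1 < R t"
    proof (rule ccontr)
      assume "\<not> a1 < R t"
      hence "T (R t) \<le> T a1" using Tmono[of "R t" a1] Rt a1 r0 by (cases "R t = a1") auto
      thus False using Rt tlo t by (simp add: tlo_def)
    qed
    define d where "d = min (R t - a1) (1 - R t) / 2"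
    have d: "0 < d" using Rt Ra1 by (simp add: d_def)
    have zr: "a1 \<le> z \<and> z < 1" if zd: "\<bar>z - R t\<bar> \<le> d" for z
    proof -
      have "R t - d \<le> z" "z \<le> R t + d" using zd by arith+
      moreover have "d \<le> (R t - a1)/2" "d \<le> (1 - R t)/2" by (auto simp: d_def)
      ultimately show ?thesis using Rt Ra1 by auto
    qed
    have "isCont R (T (R t))"
    proof (rule isCont_inverse_function[where f=T and g=R and x="R t", OF d])
      fix z assume "\<bar>z - R t\<bar> \<le> d"
      thus "R (T z) = z" using RT zr by blast
    next
      fix z assume "\<bar>z - R t\<bar> \<le> d"
      hence "a1 \<le> z \<and> z < 1" by (rule zr)
      thus "isCont T z" using Tcont[of z] a1 by auto
    qed
    hence ic: "isCont R t" using Rt by simp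
    have "(R has_real_derivative inverse (w (R t))) (at t)"
    proof (rule DERIV_inverse_function[where f=T and a=tlo and b="t+1"])
      show "(T has_real_derivative w (R t)) (at (R t))" using Td Rt by simp
      show "w (R t) \<noteq> 0" using wpos Rt by (simp add: less_imp_neq[symmetric])
      show "tlo < t" "t < t+1" using tlo t by auto
      show "T (R y) = y" if "tlo < y" "y < t+1" for y using R[of y] that by auto
    qed (rule ic)
    thus ?thesis by (simp add: w_def)
  qed
  have R0: "R 0 = r0" using RT[of r0] T0 a1 r0 by simp
  show ?thesis
    using R0 Rd R tlo a by (intro exI[of _ R]) (auto intro: less_trans)
qed


lemma bq_hom: "bq (s * u) (s * v) = s^4 * bq u v" by (simp add: bq_def algebra_simps eval_nat_numeral)
lemma bp_hom: "bp (s * u) (s * v) = s^4 * bp u v" by (simp add: bp_def algebra_simps eval_nat_numeral)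
lemma bp_sym: "bp x y = bp y x" by (simp add: bp_def algebra_simps)

locale constr =
  fixes \<beta> h0 h1 h2 h3 :: real
  assumes bpos: "\<beta> > 0" and hpos: "h0>0" "h1>0" "h2>0" "h3>0" and hlt: "h1 < h2"
begin
definition "r0 = h1/h2"
definition "cc = h0^2/(h1*h2)"
definition "SS r = 4*ln(1-r) + 3*ln(2+r+2*r^2) - 25*ln r"
definition "aa = 40*ln h2 - SS r0"
definition "G r = exp((aa + SS r)/40)"
definition "L r = (-4/(1-r) + 3*(1+4*r)/(2+r+2*r^2) - 25/r)/40"
definition "PP r = (r+1)*(2*r^2+r+2)"
definition "F r = 4*\<beta>*cc*r^2*G r^6*(1-r)*PP r"

lemma r0: "0 < r0" "r0 < 1" using hpos hlt by (auto simp: r0_def)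
lemma cc_pos: "cc > 0" using hpos by (simp add: cc_def)
lemma G_pos: "G r > 0" by (simp add: G_def)
lemma quad_pos: "(2::real)+r+2*r^2 > 0"
proof -
  have "0 \<le> (2*r+1/2)^2" by simp
  thus ?thesis by (simp add: power2_eq_square algebra_simps)
qed
lemma G_r0: "G r0 = h2" using hpos by (simp add: G_def aa_def)

lemma SS_deriv: assumes "0 < r" "r < 1" shows "(SS has_real_derivative 40 * L r) (at r)"
proof -
  have q: "2+r+2*r^2 > 0" by (rule quad_pos)
  show ?thesis unfolding SS_def[abs_def]
    using assms q by (auto intro!: derivative_eq_intros simp: L_def)
qed

lemma core: assumes "0 < r" "r < 1" shows "4*r*(1-r)*PP r*L r = - bq 1 r"
proof -
  define Q where "Q = 2+r+2*r^2"
  have q: "Q > 0" unfolding Q_def by (rule quad_pos)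
  define A where "A = -4/(1-r)"
  define B where "B = 3*(1+4*r)/Q"
  define C where "C = 25/r"
  have Ld: "L r = (A + B - C)/40" by (simp add: L_def A_def B_def C_def Q_def)
  have PPQ: "PP r = (r+1)*Q" by (simp add: PP_def Q_def)
  have gen: "4*X*((A+B-C)/40) = (X*A + X*B - X*C)/(10::real)" for X by (simp add: field_simps)
  have "4*r*(1-r)*PP r*L r = 4*(r*(1-r)*((r+1)*Q))*((A+B-C)/40)" unfolding Ld PPQ by (simp add: algebra_simps)
  also have "\<dots> = (r*(1-r)*((r+1)*Q)*A + r*(1-r)*((r+1)*Q)*B - r*(1-r)*((r+1)*Q)*C)/10" by (rule gen)
  also have "r*(1-r)*((r+1)*Q)*A = -4*r*(r+1)*Q" using assms by (simp add: A_def field_simps)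
  also have "r*(1-r)*((r+1)*Q)*B = 3*r*(1-r)*(r+1)*(1+4*r)" using q by (simp add: B_def field_simps)
  also have "r*(1-r)*((r+1)*Q)*C = 25*(1-r)*(r+1)*Q" using assms by (simp add: C_def field_simps)
  finally show ?thesis by (simp add: Q_def bq_def algebra_simps eval_nat_numeral)
qed
end

context constr begin

lemma SS_deriv': "0 < r \<Longrightarrow> r < 1 \<Longrightarrow> D = 40 * L r \<Longrightarrow> (SS has_real_derivative D) (at r)"
  using SS_deriv by simp

lemma G_deriv: assumes "0 < r" "r < 1" shows "(G has_real_derivative G r * L r) (at r)"
  unfolding G_def[abs_def] using assms by (auto intro!: derivative_eq_intros SS_deriv')

lemma G_cont: "continuous_on {0<..<1} G"
  by (intro continuous_at_imp_continuous_on ballI DERIV_isCont[OF G_deriv]) auto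

lemma F_cont: "continuous_on {0<..<1} F"
proof -
  have "continuous_on {0<..<1} (\<lambda>r. 4*\<beta>*cc*r^2*G r^6*(1-r)*((r+1)*(2*r^2+r+2)))"
    by (intro continuous_intros G_cont)
  thus ?thesis unfolding F_def[abs_def] PP_def .
qed

lemma PP_pos: "0 < (r::real) \<Longrightarrow> PP r > 0" unfolding PP_def by (intro mult_pos_pos add_pos_pos) auto

lemma F_pos: "0 < r \<Longrightarrow> r < 1 \<Longrightarrow> F r > 0"
  unfolding F_def using bpos cc_pos G_pos[of r] PP_pos[of r] by simp

definition "MM = exp (6*((aa + 3*ln 5 - 25*ln r0)/40))"
definition "CC = 40*\<beta>*cc*MM"

lemma CC_pos: "CC > 0" using bpos cc_pos by (simp add: CC_def MM_def)

lemma F_bound: assumes "r0 \<le> r" "r < 1" shows "F r \<le> CC * (1 - r)"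
proof -
  have r: "0 < r" using r0 assms by simp
  have s1: "ln (1 - r) \<le> 0" using assms r by simp
  have r21: "r^2 \<le> 1" using assms r by (simp add: power_le_one)
  have "2+r+2*r^2 \<le> (5::real)" using r21 assms by linarith
  hence s2: "ln (2+r+2*r^2) \<le> ln 5" using quad_pos[of r] by simp
  have s3: "ln r0 \<le> ln r" using r0 assms by simp
  have "SS r \<le> 3*ln 5 - 25*ln r0" unfolding SS_def using s1 s2 s3 by linarith
  hence "6*((aa + SS r)/40) \<le> 6*((aa + 3*ln 5 - 25*ln r0)/40)" by simp
  hence G6: "G r^6 \<le> MM" unfolding G_def MM_def by (simp add: exp_of_nat_mult[symmetric])
  have "(r+1) \<le> 2" "2*r^2+r+2 \<le> 5" using assms r21 by auto
  hence P10: "PP r \<le> 2*5" unfolding PP_def using r by (intro mult_mono) auto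
  have "r^2 * G r^6 * PP r \<le> 1 * MM * (2*5)"
    using r21 G6 P10 r G_pos[of r] PP_pos[of r] by (intro mult_mono) (auto simp: MM_def)
  hence "(4*\<beta>*cc*(1-r)) * (r^2 * G r^6 * PP r) \<le> (4*\<beta>*cc*(1-r)) * (1 * MM * (2*5))"
    using bpos cc_pos assms by (intro mult_left_mono) auto
  thus ?thesis by (simp add: F_def CC_def algebra_simps)
qed

lemma R_exists: "\<exists>R. R 0 = r0 \<and> (\<forall>t\<ge>0. 0 < R t \<and> R t < 1 \<and> (R has_real_derivative F (R t)) (at t))"
  by (rule ode_solve[OF r0 F_cont F_pos CC_pos F_bound])

end


lemma alg2: fixes x P Lx Q Gx \<beta> c :: real
  assumes "4*x*(1-x)*P*Lx = -Q"
  shows "Gx*Lx*(4*\<beta>*c*x^2*Gx^6*(1-x)*P) = -\<beta>*(Gx^4*Q)*(c*x*Gx^2)*Gx"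
proof -
  have "Gx*Lx*(4*\<beta>*c*x^2*Gx^6*(1-x)*P) = \<beta>*c*x*Gx^7*(4*x*(1-x)*P*Lx)"
    by (simp add: algebra_simps eval_nat_numeral)
  also have "\<dots> = -\<beta>*(Gx^4*Q)*(c*x*Gx^2)*Gx" unfolding assms by (simp add: algebra_simps eval_nat_numeral)
  finally show ?thesis .
qed

lemma alg1: fixes x P Lx Qa Qx Gx \<beta> c F :: real
  assumes "4*x*(1-x)*P*Lx = -Qa" "Qa - Qx = 4*(1-x)*P" "F = 4*\<beta>*c*x^2*Gx^6*(1-x)*P"
  shows "F*Gx + (Gx*Lx*F)*x = -\<beta>*(Gx^4*Qx)*(c*x*Gx^2)*(x*Gx)"
proof -
  have "F*Gx + (Gx*Lx*F)*x = \<beta>*c*x^2*Gx^7*(4*(1-x)*P + 4*x*(1-x)*P*Lx)"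
    unfolding assms(3) by (simp add: algebra_simps eval_nat_numeral)
  also have "\<dots> = \<beta>*c*x^2*Gx^7*(-Qx)" unfolding assms(1) using assms(2) by (simp add: algebra_simps)
  also have "\<dots> = -\<beta>*(Gx^4*Qx)*(c*x*Gx^2)*(x*Gx)" by (simp add: algebra_simps eval_nat_numeral)
  finally show ?thesis .
qed

lemma alg0: fixes x s q P Lx Qa Bx Gx \<beta> c F :: real
  assumes s: "s > 0" "s^2 = x" and q: "q^2 = c"
    and h1: "4*x*(1-x)*P*Lx = -Qa" and h2: "2*(1-x)*P - Qa = -Bx" and hF: "F = 4*\<beta>*c*x^2*Gx^6*(1-x)*P"
  shows "(q*(inverse s/2*F))*Gx + (Gx*Lx*F)*(q * s) = -\<beta>*(Gx^4*Bx)*(q * s*Gx)^3"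
proof -
  have "(q*(inverse s/2*F))*Gx + (Gx*Lx*F)*(q * s) = \<beta>*q^3*Gx^7 * s^3*(2*(1-x)*P + 4*x*(1-x)*P*Lx)"
    unfolding hF q[symmetric] s(2)[symmetric] using s(1) by (simp add: field_simps eval_nat_numeral)
  also have "\<dots> = \<beta>*q^3*Gx^7 * s^3*(2*(1-x)*P - Qa)" unfolding h1 by simp
  also have "\<dots> = \<beta>*q^3*Gx^7 * s^3*(-Bx)" unfolding h2 by simp
  also have "\<dots> = -\<beta>*(Gx^4*Bx)*(q * s*Gx)^3" by (simp add: algebra_simps eval_nat_numeral)
  finally show ?thesis .
qed

context constr begin

lemma PP_alt: "bq 1 x - bq x 1 = 4*(1-x)*PP x" by (simp add: bq_def PP_def algebra_simps eval_nat_numeral)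
lemma PP_alt2: "2*(1-x)*PP x - bq 1 x = - bp x 1" by (simp add: bq_def bp_def PP_def algebra_simps eval_nat_numeral)

lemma exists_sol: "\<exists>g0 g1 g2 g3. bach_solution \<beta> h0 h1 h2 h3 g0 g1 g2 g3"
proof -
  obtain R where R0: "R 0 = r0" and RR: "\<And>t. t\<ge>0 \<Longrightarrow> 0 < R t \<and> R t < 1 \<and> (R has_real_derivative F (R t)) (at t)"
    using R_exists by blast
  define g2 where "g2 t = G (R t)" for t
  define g1 where "g1 t = R t * G (R t)" for t
  define g0 where "g0 t = sqrt cc * sqrt (R t) * G (R t)" for t
  define g3 where "g3 t = (h0*h1*h2*h3) / (g0 t * g1 t * g2 t)" for t
  have der: "(g0 has_real_derivative (- \<beta> * bp (g1 t) (g2 t) * (g0 t)^3)) (at t) \<and>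
        (g1 has_real_derivative (- \<beta> * bq (g1 t) (g2 t) * (g0 t)^2 * g1 t)) (at t) \<and>
        (g2 has_real_derivative (- \<beta> * bq (g2 t) (g1 t) * (g0 t)^2 * g2 t)) (at t) \<and>
        (g3 has_real_derivative (3 * \<beta> * bp (g1 t) (g2 t) * (g0 t)^2 * g3 t)) (at t)" if t: "t \<ge> 0" for t
  proof -
    define x where "x = R t"
    have x: "0 < x" "x < 1" and Rd: "(R has_real_derivative F x) (at t)" using RR[OF t] by (auto simp: x_def)
    define Gx where "Gx = G x"
    have Gx: "Gx > 0" by (simp add: Gx_def G_pos)
    have Fx: "F x = 4*\<beta>*cc*x^2*Gx^6*(1-x)*PP x" by (simp add: F_def Gx_def)
    have c1: "4*x*(1-x)*PP x*L x = - bq 1 x" by (rule core[OF x])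
    have g0sq: "(g0 t)^2 = cc*x*Gx^2" using x cc_pos by (simp add: g0_def x_def Gx_def power_mult_distrib)
    have e2: "g2 t = Gx * 1" "g1 t = Gx * x" by (simp_all add: g2_def g1_def x_def Gx_def mult.commute)
    have D2: "(g2 has_real_derivative Gx * L x * F x) (at t)"
      using DERIV_chain2[OF G_deriv[OF x, unfolded x_def] Rd] by (simp add: g2_def[abs_def] x_def Gx_def)
    have "Gx * L x * F x = - \<beta> * bq (g2 t) (g1 t) * (g0 t)^2 * g2 t"
      unfolding Fx g0sq e2 bq_hom using alg2[OF c1, of Gx \<beta> cc] by simp
    with D2 have D2': "(g2 has_real_derivative (- \<beta> * bq (g2 t) (g1 t) * (g0 t)^2 * g2 t)) (at t)" by simp
    have D1: "(g1 has_real_derivative F x * Gx + (Gx * L x * F x) * x) (at t)"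
      using DERIV_mult[OF Rd D2] by (simp add: g1_def[abs_def] g2_def x_def Gx_def)
    have e1: "bq (g1 t) (g2 t) = Gx^4 * bq x 1" unfolding e2 bq_hom ..
    have "F x * Gx + (Gx * L x * F x) * x = - \<beta> * bq (g1 t) (g2 t) * (g0 t)^2 * g1 t"
      unfolding e1 g0sq using alg1[OF c1 PP_alt Fx] e2 by (simp add: mult.commute)
    with D1 have D1': "(g1 has_real_derivative (- \<beta> * bq (g1 t) (g2 t) * (g0 t)^2 * g1 t)) (at t)" by simp
    have Dsq: "((\<lambda>t. sqrt (R t)) has_real_derivative inverse (sqrt x) / 2 * F x) (at t)"
      using DERIV_chain2[OF DERIV_real_sqrt[OF x(1), unfolded x_def] Rd] by (simp add: x_def)
    have D0: "(g0 has_real_derivative (sqrt cc * (inverse (sqrt x) / 2 * F x)) * Gx + (Gx * L x * F x) * (sqrt cc * sqrt x)) (at t)"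
      using DERIV_mult[OF DERIV_cmult[OF Dsq, of "sqrt cc"] D2] by (simp add: g0_def[abs_def] g2_def x_def Gx_def)
    have e0: "bp (g1 t) (g2 t) = Gx^4 * bp x 1" unfolding e2 bp_hom ..
    have g0e: "g0 t = sqrt cc * sqrt x * Gx" by (simp add: g0_def x_def Gx_def)
    have "(sqrt cc * (inverse (sqrt x) / 2 * F x)) * Gx + (Gx * L x * F x) * (sqrt cc * sqrt x) = - \<beta> * bp (g1 t) (g2 t) * (g0 t)^3"
      unfolding e0 g0e
      by (rule alg0[where c=cc and Qa="bq 1 x" and P="PP x"]) (use x cc_pos c1 PP_alt2 Fx in auto)
    with D0 have D0': "(g0 has_real_derivative (- \<beta> * bp (g1 t) (g2 t) * (g0 t)^3)) (at t)" by simp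
    have pos: "g0 t > 0" "g1 t > 0" "g2 t > 0" using x Gx cc_pos by (simp_all add: g0e e2)
    have Dp: "((\<lambda>t. g0 t * g1 t * g2 t) has_real_derivative
        ((- \<beta> * bp (g1 t) (g2 t) * (g0 t)^3) * g1 t + (- \<beta> * bq (g1 t) (g2 t) * (g0 t)^2 * g1 t) * g0 t) * g2 t
        + (- \<beta> * bq (g2 t) (g1 t) * (g0 t)^2 * g2 t) * (g0 t * g1 t)) (at t)"
      by (rule DERIV_mult[OF DERIV_mult[OF D0' D1'] D2'])
    have D3: "(g3 has_real_derivative (0 * (g0 t * g1 t * g2 t) - (h0*h1*h2*h3) *
        (((- \<beta> * bp (g1 t) (g2 t) * (g0 t)^3) * g1 t + (- \<beta> * bq (g1 t) (g2 t) * (g0 t)^2 * g1 t) * g0 t) * g2 t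
        + (- \<beta> * bq (g2 t) (g1 t) * (g0 t)^2 * g2 t) * (g0 t * g1 t))) / ((g0 t * g1 t * g2 t) * (g0 t * g1 t * g2 t))) (at t)"
      unfolding g3_def[abs_def] using DERIV_divide[OF DERIV_const Dp] pos by simp
    have "(0 * (g0 t * g1 t * g2 t) - (h0*h1*h2*h3) *
        (((- \<beta> * bp (g1 t) (g2 t) * (g0 t)^3) * g1 t + (- \<beta> * bq (g1 t) (g2 t) * (g0 t)^2 * g1 t) * g0 t) * g2 t
        + (- \<beta> * bq (g2 t) (g1 t) * (g0 t)^2 * g2 t) * (g0 t * g1 t))) / ((g0 t * g1 t * g2 t) * (g0 t * g1 t * g2 t))
       = 3 * \<beta> * bp (g1 t) (g2 t) * (g0 t)^2 * g3 t"
      using pos by (simp add: g3_def bp_def bq_def field_simps) (simp add: algebra_simps eval_nat_numeral)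
    with D3 have D3': "(g3 has_real_derivative (3 * \<beta> * bp (g1 t) (g2 t) * (g0 t)^2 * g3 t)) (at t)" by simp
    show ?thesis using D0' D1' D2' D3' by blast
  qed
  have i2: "g2 0 = h2" by (simp add: g2_def R0 G_r0)
  have "g1 0 = r0 * h2" by (simp add: g1_def R0 G_r0)
  hence i1: "g1 0 = h1" using hpos by (simp add: r0_def)
  have "cc*r0 = (h0/h2)^2" using hpos by (simp add: cc_def r0_def power2_eq_square field_simps)
  hence "sqrt cc * sqrt r0 = h0/h2" using hpos by (simp add: real_sqrt_mult[symmetric])
  hence i0: "g0 0 = h0" using hpos by (simp add: g0_def R0 G_r0)
  have i3: "g3 0 = h3" using i0 i1 i2 hpos by (simp add: g3_def)
  show ?thesis unfolding bach_solution_def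
    using i0 i1 i2 i3 der by (intro exI[of _ g0] exI[of _ g1] exI[of _ g2] exI[of _ g3]) (auto intro: has_field_derivative_at_within)
qed

end


lemma swap_sol: "bach_solution \<beta> h0 h1 h2 h3 g0 g1 g2 g3 \<Longrightarrow> bach_solution \<beta> h0 h2 h1 h3 g0 g2 g1 g3"
  unfolding bach_solution_def by (simp add: bp_sym[of "g2 _"])

context bsol begin
lemma limits_le: assumes "h1 \<le> h2"
  shows "(g0 \<longlongrightarrow> 0) at_top \<and> (g1 \<longlongrightarrow> 0) at_top \<and> (g2 \<longlongrightarrow> 0) at_top \<and>
         filterlim g3 at_top at_top \<and> ((\<lambda>t. g1 t / g2 t) \<longlongrightarrow> 1) at_top"
proof (cases "h1 = h2")
  case True
  have le: "g1 t \<le> g2 t" if "t\<ge>0" for t using eq_case[OF True that] by simp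
  have ge: "h1/h2 * g2 t \<le> g1 t" if "t\<ge>0" for t using eq_case[OF True that] True hpos by simp
  have "\<forall>\<^sub>F t in at_top. g1 t / g2 t = 1" using eventually_ge_at_top[of 0]
    by eventually_elim (use eq_case[OF True] pos in force)
  hence "((\<lambda>t. g1 t / g2 t) \<longlongrightarrow> 1) at_top" by (rule tendsto_eventually)
  thus ?thesis using limits_common[OF le ge] by blast
next
  case False
  hence h: "h1 < h2" using assms by simp
  have le: "g1 t \<le> g2 t" if "t\<ge>0" for t using lt_case[OF h that] by simp
  have ge: "h1/h2 * g2 t \<le> g1 t" if t: "t\<ge>0" for t
  proof -
    have "g1 0 / g2 0 \<le> g1 t / g2 t"
      using ratio_mono[OF h] t by (cases "t = 0") (auto dest: monotone_onD[of _ _ _ _ 0 t])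
    thus ?thesis using init pos[OF t] by (simp add: field_simps)
  qed
  thus ?thesis using limits_common[OF le ge] lt_ratio_limit[OF h] by blast
qed
end

lemma eq_exists:
  fixes \<beta> h0 h1 h3 :: real
  assumes bpos: "\<beta> > 0" and hpos: "h0 > 0" "h1 > 0" "h3 > 0"
  shows "\<exists>g0 g1 g2 g3. bach_solution \<beta> h0 h1 h1 h3 g0 g1 g2 g3"
proof -
  define \<mu> where "\<mu> = h0^2/h1^2"
  have mupos: "\<mu> > 0" using hpos by (simp add: \<mu>_def)
  define Z where "Z t = 24 * \<mu> * \<beta> * t + h1 powr (-6)" for t
  define x where "x t = Z t powr (-1/6)" for t
  define g0 where "g0 t = sqrt \<mu> * x t" for t
  define g3 where "g3 t = (h0*h1*h1*h3) / (g0 t * x t * x t)" for t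
  have Zpos: "Z t > 0" if "t\<ge>0" for t
  proof -
    have "0 \<le> 24 * \<mu> * \<beta> * t" using that mupos bpos by simp
    moreover have "h1 powr (-6) > 0" using hpos by simp
    ultimately show ?thesis unfolding Z_def by (rule add_nonneg_pos)
  qed
  have xpos: "x t > 0" if "t \<ge> 0" for t using Zpos[OF that] by (simp add: x_def)
  have der: "(g0 has_real_derivative (- \<beta> * bp (x t) (x t) * (g0 t)^3)) (at t) \<and>
        (x has_real_derivative (- \<beta> * bq (x t) (x t) * (g0 t)^2 * x t)) (at t) \<and>
        (g3 has_real_derivative (3 * \<beta> * bp (x t) (x t) * (g0 t)^2 * g3 t)) (at t)" if t: "t \<ge> 0" for t
  proof -
    have Dx: "(x has_real_derivative (-1/6) * Z t powr (-1/6 - 1) * (24 * \<mu> * \<beta>)) (at t)"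
      unfolding x_def[abs_def] Z_def[abs_def] using Zpos[OF t]
      by (auto intro!: derivative_eq_intros simp: Z_def)
    have p7: "Z t powr (-1/6 - 1) = (x t)^7"
    proof -
      have "(x t)^7 = (x t) powr 7" using xpos[OF t] by simp
      also have "\<dots> = Z t powr (-1/6 - 1)" by (simp add: x_def powr_powr)
      finally show ?thesis by simp
    qed
    have g0sq: "(g0 t)^2 = \<mu> * (x t)^2" using mupos by (simp add: g0_def power_mult_distrib)
    have Dx': "(x has_real_derivative (- \<beta> * bq (x t) (x t) * (g0 t)^2 * x t)) (at t)"
      using Dx unfolding p7 g0sq using mupos by (simp add: bq_def algebra_simps eval_nat_numeral)
    have D0: "(g0 has_real_derivative sqrt \<mu> * (- \<beta> * bq (x t) (x t) * (g0 t)^2 * x t)) (at t)"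
    proof -
      have geq: "g0 = (\<lambda>t. sqrt \<mu> * x t)" by (simp add: g0_def[abs_def])
      show ?thesis using DERIV_cmult[OF Dx', of "sqrt \<mu>"] by (simp only: geq[symmetric])
    qed
    have eq0: "sqrt \<mu> * (- \<beta> * bq (x t) (x t) * (g0 t)^2 * x t) = - \<beta> * bp (x t) (x t) * (g0 t)^3"
      by (simp add: g0_def bq_def bp_def algebra_simps eval_nat_numeral)
    have D0': "(g0 has_real_derivative (- \<beta> * bp (x t) (x t) * (g0 t)^3)) (at t)" using D0 unfolding eq0 .
    have pos: "g0 t > 0" "x t > 0" using xpos[OF t] mupos by (simp_all add: g0_def)
    have Dp: "((\<lambda>t. g0 t * x t * x t) has_real_derivative
        ((- \<beta> * bp (x t) (x t) * (g0 t)^3) * x t + (- \<beta> * bq (x t) (x t) * (g0 t)^2 * x t) * g0 t) * x t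
        + (- \<beta> * bq (x t) (x t) * (g0 t)^2 * x t) * (g0 t * x t)) (at t)"
      by (rule DERIV_mult[OF DERIV_mult[OF D0' Dx'] Dx'])
    have D3: "(g3 has_real_derivative (0 * (g0 t * x t * x t) - (h0*h1*h1*h3) *
        (((- \<beta> * bp (x t) (x t) * (g0 t)^3) * x t + (- \<beta> * bq (x t) (x t) * (g0 t)^2 * x t) * g0 t) * x t
        + (- \<beta> * bq (x t) (x t) * (g0 t)^2 * x t) * (g0 t * x t))) / ((g0 t * x t * x t) * (g0 t * x t * x t))) (at t)"
      unfolding g3_def[abs_def] using DERIV_divide[OF DERIV_const Dp] pos by simp
    have "(0 * (g0 t * x t * x t) - (h0*h1*h1*h3) *
        (((- \<beta> * bp (x t) (x t) * (g0 t)^3) * x t + (- \<beta> * bq (x t) (x t) * (g0 t)^2 * x t) * g0 t) * x t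
        + (- \<beta> * bq (x t) (x t) * (g0 t)^2 * x t) * (g0 t * x t))) / ((g0 t * x t * x t) * (g0 t * x t * x t))
       = 3 * \<beta> * bp (x t) (x t) * (g0 t)^2 * g3 t"
      using pos by (simp add: g3_def bp_def bq_def field_simps) (simp add: algebra_simps eval_nat_numeral)
    with D3 have D3': "(g3 has_real_derivative (3 * \<beta> * bp (x t) (x t) * (g0 t)^2 * g3 t)) (at t)" by simp
    show ?thesis using D0' Dx' D3' by blast
  qed
  have x0: "x 0 = h1" using hpos by (simp add: x_def Z_def powr_powr)
  have g00: "g0 0 = h0" using hpos x0 by (simp add: g0_def \<mu>_def real_sqrt_divide)
  have g30: "g3 0 = h3" using hpos x0 g00 by (simp add: g3_def)
  show ?thesis unfolding bach_solution_def
    using x0 g00 g30 der by (intro exI[of _ g0] exI[of _ x] exI[of _ x] exI[of _ g3]) (auto intro: has_field_derivative_at_within)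
qed


theorem theorem5p3:
  fixes h0 h1 h2 h3 :: real
  assumes "h0 > 0" "h1 > 0" "h2 > 0" "h3 > 0"
  defines "dh \<equiv> h0 * h1 * h2 * h3"
  defines "\<beta> \<equiv> 1 / (6 * dh^2)"
  shows
    "(\<exists>g0 g1 g2 g3. bach_solution \<beta> h0 h1 h2 h3 g0 g1 g2 g3) \<and>
     (\<forall>g0 g1 g2 g3. bach_solution \<beta> h0 h1 h2 h3 g0 g1 g2 g3 \<longrightarrow>
        (g0 \<longlongrightarrow> 0) at_top \<and> (g1 \<longlongrightarrow> 0) at_top \<and> (g2 \<longlongrightarrow> 0) at_top \<and>
        strict_mono_on {0..} g3 \<and> filterlim g3 at_top at_top \<and>
        ((\<lambda>t. g1 t / g2 t) \<longlongrightarrow> 1) at_top \<and>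
        (h1 = h2 \<longrightarrow>
           (let \<mu> = h0^3 * h3 / dh in
            \<forall>t\<ge>0.
              g0 t = sqrt \<mu> * (24 * \<mu> * \<beta> * t + h1 powr (-6)) powr (-1/6) \<and>
              g1 t = (24 * \<mu> * \<beta> * t + h1 powr (-6)) powr (-1/6) \<and>
              g2 t = (24 * \<mu> * \<beta> * t + h1 powr (-6)) powr (-1/6) \<and>
              g3 t = h1^3 * h3 * (24 * \<mu> * \<beta> * t + h1 powr (-6)) powr (1/2))) \<and>
        (h1 < h2 \<longrightarrow>
           (\<forall>t\<ge>0. g1 t < g2 t) \<and>
           strict_antimono_on {0..} g2 \<and>
           strict_mono_on {0..} (\<lambda>t. g1 t / g2 t) \<and>
           (let \<eta> = (h1 * h2)^25 / ((h2 - h1)^4 * (2*h2^2 + h1*h2 + 2*h1^2)^3) in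
            \<forall>t\<ge>0. (g1 t * g2 t)^25 =
                    \<eta> * (g2 t - g1 t)^4 * (2 * (g2 t)^2 + g1 t * g2 t + 2 * (g1 t)^2)^3)))"
proof -
  have hp: "h0 > 0" "h1 > 0" "h2 > 0" "h3 > 0" by fact+
  have bpos: "\<beta> > 0" using hp by (simp add: \<beta>_def dh_def)
  have ex: "\<exists>g0 g1 g2 g3. bach_solution \<beta> h0 h1 h2 h3 g0 g1 g2 g3"
  proof (cases h1 h2 rule: linorder_cases)
    case less
    interpret constr \<beta> h0 h1 h2 h3 using bpos hp less by unfold_locales
    show ?thesis by (rule exists_sol)
  next
    case equal
    show ?thesis using eq_exists[OF bpos hp(1) hp(2) hp(4)] equal by simp
  next
    case greater
    interpret constr \<beta> h0 h2 h1 h3 using bpos hp greater by unfold_locales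
    obtain g0 g1 g2 g3 where "bach_solution \<beta> h0 h2 h1 h3 g0 g1 g2 g3" using exists_sol by blast
    from swap_sol[OF this] show ?thesis by blast
  qed
  have all: "(g0 \<longlongrightarrow> 0) at_top \<and> (g1 \<longlongrightarrow> 0) at_top \<and> (g2 \<longlongrightarrow> 0) at_top \<and>
        strict_mono_on {0..} g3 \<and> filterlim g3 at_top at_top \<and>
        ((\<lambda>t. g1 t / g2 t) \<longlongrightarrow> 1) at_top \<and>
        (h1 = h2 \<longrightarrow>
           (let \<mu> = h0^3 * h3 / dh in
            \<forall>t\<ge>0.
              g0 t = sqrt \<mu> * (24 * \<mu> * \<beta> * t + h1 powr (-6)) powr (-1/6) \<and>
              g1 t = (24 * \<mu> * \<beta> * t + h1 powr (-6)) powr (-1/6) \<and>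
              g2 t = (24 * \<mu> * \<beta> * t + h1 powr (-6)) powr (-1/6) \<and>
              g3 t = h1^3 * h3 * (24 * \<mu> * \<beta> * t + h1 powr (-6)) powr (1/2))) \<and>
        (h1 < h2 \<longrightarrow>
           (\<forall>t\<ge>0. g1 t < g2 t) \<and>
           strict_antimono_on {0..} g2 \<and>
           strict_mono_on {0..} (\<lambda>t. g1 t / g2 t) \<and>
           (let \<eta> = (h1 * h2)^25 / ((h2 - h1)^4 * (2*h2^2 + h1*h2 + 2*h1^2)^3) in
            \<forall>t\<ge>0. (g1 t * g2 t)^25 =
                    \<eta> * (g2 t - g1 t)^4 * (2 * (g2 t)^2 + g1 t * g2 t + 2 * (g1 t)^2)^3))"
    if S: "bach_solution \<beta> h0 h1 h2 h3 g0 g1 g2 g3" for g0 g1 g2 g3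
  proof -
    interpret B: bsol \<beta> h0 h1 h2 h3 g0 g1 g2 g3 using bpos hp S by unfold_locales
    have lim: "(g0 \<longlongrightarrow> 0) at_top \<and> (g1 \<longlongrightarrow> 0) at_top \<and> (g2 \<longlongrightarrow> 0) at_top \<and>
         filterlim g3 at_top at_top \<and> ((\<lambda>t. g1 t / g2 t) \<longlongrightarrow> 1) at_top"
    proof (cases "h1 \<le> h2")
      case True
      thus ?thesis by (rule B.limits_le)
    next
      case False
      interpret B2: bsol \<beta> h0 h2 h1 h3 g0 g2 g1 g3 using bpos hp swap_sol[OF S] by unfold_locales
      have L: "(g0 \<longlongrightarrow> 0) at_top \<and> (g2 \<longlongrightarrow> 0) at_top \<and> (g1 \<longlongrightarrow> 0) at_top \<and>
         filterlim g3 at_top at_top \<and> ((\<lambda>t. g2 t / g1 t) \<longlongrightarrow> 1) at_top"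
        using False by (intro B2.limits_le) simp
      hence "((\<lambda>t. inverse (g2 t / g1 t)) \<longlongrightarrow> inverse 1) at_top" by (intro tendsto_inverse) auto
      hence "((\<lambda>t. g1 t / g2 t) \<longlongrightarrow> 1) at_top" by simp
      thus ?thesis using L by blast
    qed
    have eqp: "h1 = h2 \<longrightarrow>
           (let \<mu> = h0^3 * h3 / dh in
            \<forall>t\<ge>0.
              g0 t = sqrt \<mu> * (24 * \<mu> * \<beta> * t + h1 powr (-6)) powr (-1/6) \<and>
              g1 t = (24 * \<mu> * \<beta> * t + h1 powr (-6)) powr (-1/6) \<and>
              g2 t = (24 * \<mu> * \<beta> * t + h1 powr (-6)) powr (-1/6) \<and>
              g3 t = h1^3 * h3 * (24 * \<mu> * \<beta> * t + h1 powr (-6)) powr (1/2))"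
      using B.eq_formulas unfolding dh_def Let_def by blast
    have ltp: "h1 < h2 \<longrightarrow>
           (\<forall>t\<ge>0. g1 t < g2 t) \<and>
           strict_antimono_on {0..} g2 \<and>
           strict_mono_on {0..} (\<lambda>t. g1 t / g2 t) \<and>
           (let \<eta> = (h1 * h2)^25 / ((h2 - h1)^4 * (2*h2^2 + h1*h2 + 2*h1^2)^3) in
            \<forall>t\<ge>0. (g1 t * g2 t)^25 =
                    \<eta> * (g2 t - g1 t)^4 * (2 * (g2 t)^2 + g1 t * g2 t + 2 * (g1 t)^2)^3)"
      using B.lt_case B.g2_anti B.ratio_mono B.eta_id unfolding Let_def by blast
    show ?thesis using lim eqp ltp B.g3_mono by blast
  qed
  show ?thesis using ex all by blast
qed

end
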